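(* Let $d\ge1$ and let $p\in\mathbb{C}[\mathbb{Z}^d]=\mathbb{C}[z_1^{\pm1},\dots,z_d^{\pm1}]$ be non-zero. If $\operatorname{wd}(p)=0$, then $F(r_p^{(2)})(\lambda)=0$ for all $0\le\lambda<|\operatorname{lead}(p)|$ and $F(r_p^{(2)})(\lambda)=1$ for all $\lambda\ge|\operatorname{lead}(p)|$. If $\operatorname{wd}(p)\ge1$, then for all $\lambda\ge0$ \[ F\bigl(r_p^{(2)}\bigr)(\lambda)\le\frac{8\sqrt3}{\sqrt{47}}\cdot d\cdot\operatorname{wd}(p)\cdot\left(\frac{\lambda}{|\operatorname{lead}(p)|}\right)^{\frac{1}{d\cdot\operatorname{wd}(p)}}. \]
   Context: For non-zero $p\in\mathbb{C}[\mathbb{Z}^d]$ write uniquely $p=\sum_{n=n^-}^{n^+} q_n(z_1^{\pm1},\dots,z_{d-1}^{\pm1})\, z_d^n$ with $n^-\le n^+$, $q_n\in\mathbb{C}[\mathbb{Z}^{d-1}]$, $q_{n^-}\neq0\neq q_{n^+}$; set $w(p)=n^+-n^-$ and $q^+(p)=q_{n^+}$. Define $p_0=p$, $p_i=q^+(p_{i-1})\in\mathbb{C}[\mathbb{Z}^{d-i}]$ for $i=1,\dots,d$, $w_0(p)=w(p)$, $w_i(p)=w(p_i)$ for $i=1,\dots,d-1$. Then $\operatorname{wd}(p)=\max\{w_0(p),\dots,w_{d-1}(p)\}$ and $\operatorname{lead}(p)=p_d\in\mathbb{C}\setminus\{0\}$. The operator $r_p^{(2)}\colon L^2(\mathbb{Z}^d)\to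 L^2(\mathbb{Z}^d)$ is multiplication by $p$, and its spectral density function is $F(r_p^{(2)})(\lambda)=\mu_{T^d}\bigl(\{z\in T^d : |p(z)|\le\lambda\}\bigr)$, where $\mu_{T^d}$ is the normalized Haar measure on the torus $T^d=(S^1)^d$. *)

theory Defs
  imports "HOL-Analysis.Analysis"
begin

text \<open>A Laurent polynomial in C[Z^d] is represented by its coefficient function on
exponent vectors e :: nat \<Rightarrow> int; variable z_(i+1) corresponds to index i.\<close>

type_synonym lpoly = "(nat \<Rightarrow> int) \<Rightarrow> complex"

definition lsupp :: "lpoly \<Rightarrow> (nat \<Rightarrow> int) set" where
  "lsupp p = {e. p e \<noteq> 0}"

definition laurent_poly :: "nat \<Rightarrow> lpoly \<Rightarrow> bool" where
  "laurent_poly k p \<longleftrightarrow> finite (lsupp p) \<and> (\<forall>e\<in>lsupp p. \<forall>i\<ge>k. e i = 0)"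

definition top_deg :: "nat \<Rightarrow> lpoly \<Rightarrow> int" where
  "top_deg k p = Max ((\<lambda>e. e (k - 1)) ` lsupp p)"

definition bot_deg :: "nat \<Rightarrow> lpoly \<Rightarrow> int" where
  "bot_deg k p = Min ((\<lambda>e. e (k - 1)) ` lsupp p)"

definition width :: "nat \<Rightarrow> lpoly \<Rightarrow> nat" where
  "width k p = nat (top_deg k p - bot_deg k p)"

text \<open>q^+(p) \<in> C[Z^(k-1)]: the coefficient of the top power of z_k.\<close>
definition qplus :: "nat \<Rightarrow> lpoly \<Rightarrow> lpoly" where
  "qplus k p = (\<lambda>e. if e (k - 1) = 0 then p (e(k - 1 := top_deg k p)) else 0)"

fun lead_seq :: "nat \<Rightarrow> nat \<Rightarrow> lpoly \<Rightarrow> lpoly" where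
  "lead_seq d 0 p = p"
| "lead_seq d (Suc i) p = qplus (d - i) (lead_seq d i p)"

definition wd :: "nat \<Rightarrow> lpoly \<Rightarrow> nat" where
  "wd d p = Max ((\<lambda>i. width (d - i) (lead_seq d i p)) ` {..<d})"

text \<open>p_d is a constant, i.e. supported at the zero exponent vector.\<close>
definition lead :: "nat \<Rightarrow> lpoly \<Rightarrow> complex" where
  "lead d p = lead_seq d d p (\<lambda>_. 0)"

definition lpeval :: "nat \<Rightarrow> lpoly \<Rightarrow> (nat \<Rightarrow> complex) \<Rightarrow> complex" where
  "lpeval d p z = (\<Sum>e\<in>lsupp p. p e * (\<Prod>i<d. z i powi e i))"

definition haar_circle :: "complex measure" where
  "haar_circle = distr (uniform_measure lborel {0..2*pi}) borel cis"

definition haar_torus :: "nat \<Rightarrow> (nat \<Rightarrow> complex) measure" where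
  "haar_torus d = PiM {..<d} (\<lambda>_. haar_circle)"

definition spec_density :: "nat \<Rightarrow> lpoly \<Rightarrow> real \<Rightarrow> real" where
  "spec_density d p t =
     measure (haar_torus d) {z \<in> space (haar_torus d). cmod (lpeval d p z) \<le> t}"

end

theory Submission imports Defs "HOL-Probability.Probability" "HOL-Computational_Algebra.Fundamental_Theorem_Algebra"
begin

lemma sin_half_lower:
  fixes u :: real
  assumes "0 \<le> u" "u \<le> pi/2"
  shows "u/2 \<le> sin u"
proof -
  have b: "\<bar>sin u - (\<Sum>m<3. sin_coeff m * u ^ m)\<bar> \<le> inverse (fact 3) * \<bar>u\<bar> ^ 3"
    by (rule Maclaurin_sin_bound)
  have s: "(\<Sum>m<3. sin_coeff m * u ^ m) = u"
    by (simp add: numeral_3_eq_3 sin_coeff_def)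
  have f: "(fact 3 :: real) = 6" by (simp add: numeral_3_eq_3)
  have "\<bar>sin u - u\<bar> \<le> u^3/6" using b assms unfolding s f by (simp add: field_simps)
  hence 1: "sin u \<ge> u - u^3/6" unfolding abs_le_iff by linarith
  have "u \<le> 1.6" using assms pi_approx by simp
  hence "u^2 \<le> 1.6^2" using assms by (intro power_mono) auto
  moreover have "(1.6::real)^2 \<le> 3" by (simp add: power2_eq_square)
  ultimately have 2: "u^2 \<le> 3" by linarith
  have "u^3 = u * u^2" by (simp add: power2_eq_square power3_eq_cube)
  also have "\<dots> \<le> u * 3" using 2 assms by (intro mult_left_mono) auto
  finally show ?thesis using 1 by simp
qed

lemma cis_dist: "cmod (cis a - cis b) = 2 * \<bar>sin ((a - b)/2)\<bar>"
proof -
  have "(cmod (cis a - cis b))^2 = (cos a - cos b)^2 + (sin a - sin b)^2"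
    by (simp add: cmod_power2)
  also have "\<dots> = 2 - 2 * cos (a - b)"
    by (simp add: power2_diff cos_diff algebra_simps)
  also have "cos (a - b) = 1 - 2 * sin ((a-b)/2)^2"
  proof -
    have "cos (a-b) = cos (2*((a-b)/2))" by (rule arg_cong[where f=cos]) simp
    also have "\<dots> = 1 - 2 * sin ((a-b)/2)^2" by (rule cos_double_sin)
    finally show ?thesis .
  qed
  finally have "(cmod (cis a - cis b))^2 = (2 * \<bar>sin ((a - b)/2)\<bar>)^2"
    by (simp add: power_mult_distrib)
  thus ?thesis by (rule power2_eq_imp_eq) simp_all
qed
lemma arc_bound:
  fixes v r :: real
  assumes "0 \<le> v" "v \<le> 2*pi" "2 * sin (v/2) \<le> 2*r"
  shows "v \<le> 4*r \<or> 2*pi - v \<le> 4*r"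
proof (cases "v \<le> pi")
  case True
  have "v/2/2 \<le> sin (v/2)" using assms True by (intro sin_half_lower) auto
  hence "v \<le> 4*r" using assms(3) by linarith
  thus ?thesis by simp
next
  case False
  have "sin (v/2) = sin (pi - v/2)" by simp
  also have "pi - v/2 = (2*pi - v)/2" by simp
  finally have e: "sin (v/2) = sin ((2*pi - v)/2)" .
  have "(2*pi - v)/2/2 \<le> sin ((2*pi-v)/2)" using assms False by (intro sin_half_lower) auto
  moreover have "sin ((2*pi - v)/2) \<le> r" using assms(3) e by simp
  ultimately have "(2*pi - v)/2/2 \<le> r" by (rule order_trans)
  hence "2*pi - v \<le> 4*r" by simp
  thus ?thesis by simp
qed

lemma cis_meas[measurable]: "cis \<in> borel_measurable borel"
  by (intro borel_measurable_continuous_onI continuous_intros)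

lemma disk_bound:
  fixes a :: complex and r :: real
  assumes r: "0 \<le> r"
  shows "emeasure lborel {\<theta>\<in>{0..2*pi}. cmod (cis \<theta> - a) \<le> r} \<le> ennreal (8*r)"
proof -
  define S where "S = {\<theta>\<in>{0..2*pi}. cmod (cis \<theta> - a) \<le> r}"
  show ?thesis
  proof (cases "S = {}")
    case True
    thus ?thesis unfolding S_def[symmetric] by simp
  next
    case False
    have Seq: "S = {0..2*pi} \<inter> {\<theta>. cmod (cis \<theta> - a) \<le> r}" unfolding S_def by auto
    have "closed {\<theta>::real. cmod (cis \<theta> - a) \<le> r}"
      by (intro closed_Collect_le continuous_intros)
    hence "compact S" unfolding Seq by (intro compact_Int_closed compact_Icc)
    then obtain t where t: "t \<in> S" and tmin: "\<And>x. x \<in> S \<Longrightarrow> t \<le> x"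
      using compact_attains_inf[OF _ False] by blast
    have t02: "0 \<le> t" "t \<le> 2*pi" using t unfolding S_def by auto
    have sub: "S \<subseteq> {t..t+4*r} \<union> {t+2*pi-4*r..2*pi}"
    proof
      fix x assume x: "x \<in> S"
      have x02: "0 \<le> x" "x \<le> 2*pi" using x unfolding S_def by auto
      have tx: "t \<le> x" using tmin[OF x] .
      have "cis x - cis t = (cis x - a) + (a - cis t)" by simp
      hence "cmod (cis x - cis t) \<le> cmod (cis x - a) + cmod (a - cis t)"
        by (metis norm_triangle_ineq)
      also have "cmod (cis x - a) \<le> r" using x unfolding S_def by simp
      also have "cmod (a - cis t) \<le> r" using t unfolding S_def by (simp add: norm_minus_commute)
      finally have 1: "2 * \<bar>sin ((x - t)/2)\<bar> \<le> 2*r" by (simp add: cis_dist)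
      have "0 \<le> sin ((x-t)/2)" using tx x02 t02 by (intro sin_ge_zero) auto
      hence "2 * sin ((x - t)/2) \<le> 2*r" using 1 by simp
      hence "x - t \<le> 4*r \<or> 2*pi - (x - t) \<le> 4*r"
        using tx x02 t02 by (intro arc_bound) auto
      thus "x \<in> {t..t+4*r} \<union> {t+2*pi-4*r..2*pi}" using tx x02 by auto
    qed
    have "emeasure lborel S \<le> emeasure lborel ({t..t+4*r} \<union> {t+2*pi-4*r..2*pi})"
      by (rule emeasure_mono[OF sub]) simp
    also have "\<dots> \<le> emeasure lborel {t..t+4*r} + emeasure lborel {t+2*pi-4*r..2*pi}"
      by (rule emeasure_subadditive) simp_all
    also have "\<dots> = ennreal (4*r) + ennreal (4*r - t)" using r by (simp add: emeasure_lborel_Icc_eq algebra_simps ennreal_eq_0_iff)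
    also have "\<dots> \<le> ennreal (4*r) + ennreal (4*r)"
      using t02 by (intro add_left_mono ennreal_leI) simp
    also have "\<dots> = ennreal (8*r)" using r by (simp flip: ennreal_plus)
    finally show ?thesis unfolding S_def .
  qed
qed


lemma haar_circle_prob: "prob_space haar_circle"
proof -
  have "prob_space (uniform_measure lborel {0..2*pi})"
    by (intro prob_space_uniform_measure) auto
  thus ?thesis unfolding haar_circle_def
    by (intro prob_space.prob_space_distr) auto
qed

lemma space_haar_circle[simp]: "space haar_circle = UNIV"
  and sets_haar_circle[simp, measurable_cong]: "sets haar_circle = sets borel"
  unfolding haar_circle_def by auto

lemma haar_circle_emeasure:
  assumes A: "A \<in> sets borel"
  shows "emeasure haar_circle A = emeasure lborel ({0..2*pi} \<inter> cis -` A) / ennreal (2*pi)"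
proof -
  have m: "cis -` A \<in> sets lborel" using measurable_sets[OF cis_meas A] by simp
  have "emeasure haar_circle A = emeasure (uniform_measure lborel {0..2*pi}) (cis -` A)"
    unfolding haar_circle_def using A by (subst emeasure_distr) auto
  also have "\<dots> = emeasure lborel ({0..2*pi} \<inter> cis -` A) / ennreal (2*pi)"
    using m by (subst emeasure_uniform_measure) auto
  finally show ?thesis .
qed

lemma prod_gt:
  fixes f :: "nat \<Rightarrow> real"
  assumes "\<forall>j<n. r < f j" "0 \<le> r" "1 \<le> n"
  shows "r ^ n < (\<Prod>j<n. f j)"
  using assms
proof (induction n)
  case 0 thus ?case by simp
next
  case (Suc m)
  show ?case
  proof (cases "m = 0")
    case True thus ?thesis using Suc by simp
  next
    case False
    have 1: "r ^ m < (\<Prod>j<m. f j)" using Suc False by simp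
    have 2: "r < f m" using Suc by simp
    have 3: "0 < (\<Prod>j<m. f j)" using 1 zero_le_power[of r m] Suc.prems(2) by linarith
    have "r ^ m * r < (\<Prod>j<m. f j) * f m"
      using 1 2 3 Suc.prems(2) by (intro mult_strict_mono) auto
    thus ?thesis by (simp add: mult.commute)
  qed
qed

lemma one_var:
  fixes F :: "complex \<Rightarrow> complex" and c :: complex and a :: "nat \<Rightarrow> complex" and W n :: nat
    and lam :: real
  assumes F: "F \<in> borel_measurable borel" and c: "c \<noteq> 0"
    and rep: "\<And>x. cmod x = 1 \<Longrightarrow> cmod (F x) = cmod c * (\<Prod>j<n. cmod (x - a j))"
    and W: "1 \<le> W" "n \<le> W" and lam: "0 < lam"
  shows "emeasure haar_circle {x. cmod (F x) \<le> lam} \<le> ennreal (2 * real W * (lam/cmod c) powr (1 / real W))"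
proof -
  interpret P: prob_space haar_circle by (rule haar_circle_prob)
  define X where "X = {x. cmod (F x) \<le> lam}"
  have Xm: "X \<in> sets borel" unfolding X_def using F by measurable
  define x0 where "x0 = lam / cmod c"
  have x0pos: "0 < x0" unfolding x0_def using lam c by simp
  show ?thesis
  proof (cases "1 \<le> x0")
    case True
    have "emeasure haar_circle X \<le> 1" by (rule P.emeasure_le_1)
    also have "1 \<le> ennreal (2 * real W * x0 powr (1 / real W))"
    proof -
      have "1 \<le> x0 powr (1 / real W)" using True by (intro ge_one_powr_ge_zero) auto
      moreover have "(1::real) \<le> 2 * W" using W by simp
      ultimately have "1 * 1 \<le> 2 * real W * x0 powr (1 / real W)" by (intro mult_mono) auto
      thus ?thesis by simp
    qed
    finally show ?thesis unfolding X_def x0_def .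
  next
    case False
    define B where "B = {0..2*pi} \<inter> cis -` X"
    have hB: "emeasure haar_circle X = emeasure lborel B / ennreal (2*pi)"
      unfolding B_def by (rule haar_circle_emeasure[OF Xm])
    show ?thesis
    proof (cases "n = 0")
      case True
      have "B = {}"
      proof -
        { fix t assume "t \<in> B"
          hence "cmod (F (cis t)) \<le> lam" unfolding B_def X_def by simp
          moreover have "cmod (F (cis t)) = cmod c" using rep[of "cis t"] True by simp
          ultimately have "cmod c \<le> lam" by simp
          hence "1 \<le> x0" unfolding x0_def using c by simp
          with False have False by simp }
        thus ?thesis by blast
      qed
      thus ?thesis unfolding X_def[symmetric] hB by simp
    next
      case nne: False
      have w1: "1 \<le> n" using nne by simp
      define r where "r = x0 powr (1/n)"
      have rpos: "0 < r" unfolding r_def using x0pos by simp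
      have rw: "r ^ n = x0"
      proof -
        have "r ^ n = r powr real n" using rpos by (simp add: powr_realpow)
        also have "\<dots> = x0" unfolding r_def powr_powr using w1 x0pos by simp
        finally show ?thesis .
      qed
      define D where "D = (\<lambda>j. {\<theta>\<in>{0..2*pi}. cmod (cis \<theta> - a j) \<le> r})"
      have Dm: "D j \<in> sets lborel" for j
        unfolding D_def by measurable
      have sub: "B \<subseteq> (\<Union>j\<in>{..<n}. D j)"
      proof
        fix t assume t: "t \<in> B"
        show "t \<in> (\<Union>j\<in>{..<n}. D j)"
        proof (rule ccontr)
          assume "t \<notin> (\<Union>j\<in>{..<n}. D j)"
          hence "\<forall>j<n. r < cmod (cis t - a j)" using t unfolding B_def D_def by (auto simp: not_le)
          hence "r ^ n < (\<Prod>j<n. cmod (cis t - a j))"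
            using rpos w1 by (intro prod_gt) auto
          hence "x0 < (\<Prod>j<n. cmod (cis t - a j))" using rw by simp
          hence "cmod c * x0 < cmod c * (\<Prod>j<n. cmod (cis t - a j))" using c by simp
          also have "\<dots> = cmod (F (cis t))" using rep[of "cis t"] by simp
          also have "\<dots> \<le> lam" using t unfolding B_def X_def by simp
          finally show False unfolding x0_def using c by simp
        qed
      qed
      have "emeasure lborel B \<le> emeasure lborel (\<Union>j\<in>{..<n}. D j)"
        by (rule emeasure_mono[OF sub]) (use Dm in auto)
      also have "\<dots> \<le> (\<Sum>j\<in>{..<n}. emeasure lborel (D j))"
        by (rule emeasure_subadditive_finite) (use Dm in auto)
      also have "\<dots> \<le> (\<Sum>j\<in>{..<n}. ennreal (8*r))"
        unfolding D_def by (intro sum_mono disk_bound) (use rpos in simp)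
      also have "\<dots> = ennreal (real n * (8*r))"
        using rpos by (simp add: ennreal_mult ennreal_of_nat_eq_real_of_nat)
      finally have 1: "emeasure lborel B \<le> ennreal (real n * (8*r))" .
      have "emeasure haar_circle X \<le> ennreal (real n * (8*r)) / ennreal (2*pi)"
        unfolding hB by (rule divide_right_mono_ennreal[OF 1])
      also have "\<dots> = ennreal (real n * (8*r) / (2*pi))"
        using rpos by (intro divide_ennreal) auto
      also have "\<dots> \<le> ennreal (2 * real W * x0 powr (1 / real W))"
      proof (rule ennreal_leI)
        have "real n * (8*r) / (2*pi) \<le> real n * (8*r) / 4"
          using rpos pi_gt3 by (intro divide_left_mono) auto
        also have "\<dots> = 2 * n * r" by simp
        also have "\<dots> \<le> 2 * real W * x0 powr (1 / real W)"
        proof -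
          have a: "2 * real n \<le> 2 * real W" using W by simp
          have b: "r \<le> x0 powr (1 / real W)" unfolding r_def
            using x0pos False w1 W by (intro powr_mono') (auto simp: field_simps)
          show ?thesis using a b rpos by (intro mult_mono) auto
        qed
        finally show "real n * (8*r) / (2*pi) \<le> 2 * real W * x0 powr (1 / real W)" .
      qed
      finally show ?thesis unfolding X_def x0_def .
    qed
  qed
qed



lemma top_deg_Suc: "top_deg (Suc d) p = Max ((\<lambda>e. e d) ` lsupp p)"
  unfolding top_deg_def by (simp only: diff_Suc_1)

lemma bot_deg_Suc: "bot_deg (Suc d) p = Min ((\<lambda>e. e d) ` lsupp p)"
  unfolding bot_deg_def by (simp only: diff_Suc_1)

lemma top_bot_bounds:
  assumes "laurent_poly (Suc d) p" "e \<in> lsupp p"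
  shows "e d \<le> top_deg (Suc d) p" "bot_deg (Suc d) p \<le> e d"
  using assms unfolding top_deg_Suc bot_deg_Suc laurent_poly_def by auto

lemma top_attained:
  assumes "laurent_poly (Suc d) p" "lsupp p \<noteq> {}"
  obtains e where "e \<in> lsupp p" "e d = top_deg (Suc d) p"
proof -
  have "top_deg (Suc d) p \<in> (\<lambda>e. e d) ` lsupp p"
    using assms unfolding top_deg_Suc laurent_poly_def by (intro Max_in) auto
  thus ?thesis using that by auto
qed

lemma qplus_eq: "qplus (Suc d) p = (\<lambda>e. if e d = 0 then p (e(d := top_deg (Suc d) p)) else 0)"
  unfolding qplus_def by (simp only: diff_Suc_1)

lemma lsupp_qplus:
  "lsupp (qplus (Suc d) p) = (\<lambda>e. e(d:=0)) ` {e\<in>lsupp p. e d = top_deg (Suc d) p}"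
proof (intro equalityI subsetI)
  fix f assume "f \<in> lsupp (qplus (Suc d) p)"
  hence f: "f d = 0" "p (f(d := top_deg (Suc d) p)) \<noteq> 0"
    unfolding lsupp_def qplus_eq by (auto split: if_splits)
  have "f = (f(d := top_deg (Suc d) p))(d := 0)" using f by auto
  moreover have "f(d := top_deg (Suc d) p) \<in> {e\<in>lsupp p. e d = top_deg (Suc d) p}"
    using f unfolding lsupp_def by auto
  ultimately show "f \<in> (\<lambda>e. e(d:=0)) ` {e\<in>lsupp p. e d = top_deg (Suc d) p}"
    by (rule image_eqI)
next
  fix f assume "f \<in> (\<lambda>e. e(d:=0)) ` {e\<in>lsupp p. e d = top_deg (Suc d) p}"
  then obtain e where e: "e \<in> lsupp p" "e d = top_deg (Suc d) p" "f = e(d:=0)" by auto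
  have "(e(d:=0))(d := top_deg (Suc d) p) = e" using e by auto
  thus "f \<in> lsupp (qplus (Suc d) p)" using e unfolding lsupp_def qplus_eq by auto
qed

lemma qplus_laurent:
  assumes "laurent_poly (Suc d) p" "lsupp p \<noteq> {}"
  shows "laurent_poly d (qplus (Suc d) p)" "lsupp (qplus (Suc d) p) \<noteq> {}"
proof -
  show "laurent_poly d (qplus (Suc d) p)"
    unfolding laurent_poly_def lsupp_qplus
  proof (intro conjI ballI allI impI)
    show "finite ((\<lambda>e. e(d:=0)) ` {e\<in>lsupp p. e d = top_deg (Suc d) p})"
      using assms unfolding laurent_poly_def by auto
  next
    fix f i assume f: "f \<in> (\<lambda>e. e(d:=0)) ` {e\<in>lsupp p. e d = top_deg (Suc d) p}" and "d \<le> i"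
    then obtain e where e: "e \<in> lsupp p" "f = e(d:=0)" by auto
    show "f i = 0"
    proof (cases "i = d")
      case True thus ?thesis using e by simp
    next
      case False
      hence "Suc d \<le> i" using \<open>d \<le> i\<close> by simp
      thus ?thesis using e assms(1) False unfolding laurent_poly_def by auto
    qed
  qed
  obtain e where "e \<in> lsupp p" "e d = top_deg (Suc d) p" using top_attained[OF assms] .
  thus "lsupp (qplus (Suc d) p) \<noteq> {}" unfolding lsupp_qplus by auto
qed

lemma lpeval_qplus:
  "lpeval d (qplus (Suc d) p) z =
     (\<Sum>e\<in>{e\<in>lsupp p. e d = top_deg (Suc d) p}. p e * (\<Prod>i<d. z i powi e i))"
proof -
  let ?S = "{e\<in>lsupp p. e d = top_deg (Suc d) p}"
  have inj: "inj_on (\<lambda>e. e(d:=0)) ?S"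
  proof (rule inj_onI)
    fix e e' assume "e \<in> ?S" "e' \<in> ?S" "e(d:=0) = e'(d:=0)"
    thus "e = e'" by (metis (mono_tags, lifting) fun_upd_triv fun_upd_upd mem_Collect_eq)
  qed
  have "lpeval d (qplus (Suc d) p) z
        = (\<Sum>f\<in>(\<lambda>e. e(d:=0)) ` ?S. qplus (Suc d) p f * (\<Prod>i<d. z i powi f i))"
    unfolding lpeval_def lsupp_qplus ..
  also have "\<dots> = (\<Sum>e\<in>?S. qplus (Suc d) p (e(d:=0)) * (\<Prod>i<d. z i powi (e(d:=0)) i))"
    by (rule sum.reindex[OF inj, unfolded comp_def])
  also have "\<dots> = (\<Sum>e\<in>?S. p e * (\<Prod>i<d. z i powi e i))"
  proof (rule sum.cong[OF refl])
    fix e assume e: "e \<in> ?S"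
    have "(e(d:=0))(d := top_deg (Suc d) p) = e" using e by auto
    hence "qplus (Suc d) p (e(d:=0)) = p e" unfolding qplus_eq by simp
    moreover have "(\<Prod>i<d. z i powi (e(d:=0)) i) = (\<Prod>i<d. z i powi e i)"
      by (intro prod.cong) auto
    ultimately show "qplus (Suc d) p (e(d:=0)) * (\<Prod>i<d. z i powi (e(d:=0)) i) = p e * (\<Prod>i<d. z i powi e i)"
      by simp
  qed
  finally show ?thesis .
qed

lemma lead_seq_shift: "lead_seq (Suc d) (Suc i) p = lead_seq d i (qplus (Suc d) p)"
  by (induction i) auto

lemma lead_shift: "lead (Suc d) p = lead d (qplus (Suc d) p)"
  unfolding lead_def by (simp only: lead_seq_shift)

lemma width_shift: "width (Suc d - Suc i) (lead_seq (Suc d) (Suc i) p) = width (d - i) (lead_seq d i (qplus (Suc d) p))"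
  by (simp only: lead_seq_shift diff_Suc_Suc)

lemma width_eq: "width (Suc d) p = nat (top_deg (Suc d) p - bot_deg (Suc d) p)"
  unfolding width_def ..



lemma meas_inverse_c: "(\<lambda>x::complex. inverse x) \<in> borel_measurable borel"
  by (rule borel_measurable_inverse) simp

lemma meas_power_c: "(\<lambda>x::complex. x ^ m) \<in> borel_measurable borel"
  by (intro borel_measurable_continuous_onI continuous_intros)

lemma meas_powi: "(\<lambda>x::complex. x powi n) \<in> borel_measurable borel"
proof (cases "0 \<le> n")
  case True
  hence "(\<lambda>x::complex. x powi n) = (\<lambda>x. x ^ nat n)" by (simp add: power_int_def fun_eq_iff)
  thus ?thesis using meas_power_c by simp
next
  case False
  hence "(\<lambda>x::complex. x powi n) = (\<lambda>x. (inverse x) ^ nat (-n))" by (simp add: power_int_def fun_eq_iff)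
  moreover have "(\<lambda>x::complex. (inverse x) ^ nat (-n)) \<in> borel_measurable borel"
    using measurable_compose[OF meas_inverse_c meas_power_c] by simp
  ultimately show ?thesis by simp
qed

lemma meas_lpeval:
  assumes "{..<d} \<subseteq> I"
  shows "(\<lambda>z. lpeval d p z) \<in> borel_measurable (PiM I (\<lambda>_. haar_circle))"
proof -
  have c: "(\<lambda>z. z i powi n) \<in> borel_measurable (PiM I (\<lambda>_. haar_circle))" if "i < d" for i n
  proof -
    have "(\<lambda>z. z i) \<in> measurable (PiM I (\<lambda>_. haar_circle)) haar_circle"
      using that assms by (intro measurable_component_singleton) (simp add: subset_iff)
    hence "(\<lambda>z. z i) \<in> measurable (PiM I (\<lambda>_. haar_circle)) borel"
      by (simp only: measurable_cong_sets[OF refl sets_haar_circle])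
    thus ?thesis by (rule measurable_compose[OF _ meas_powi])
  qed
  have t: "(\<lambda>z. p e * (\<Prod>i<d. z i powi e i)) \<in> borel_measurable (PiM I (\<lambda>_. haar_circle))" for e
  proof -
    have "(\<lambda>z. \<Prod>i<d. z i powi e i) \<in> borel_measurable (PiM I (\<lambda>_. haar_circle))"
      by (rule borel_measurable_prod) (use c in simp)
    thus ?thesis by (rule borel_measurable_times[OF borel_measurable_const])
  qed
  show ?thesis unfolding lpeval_def
    by (rule borel_measurable_sum) (rule t)
qed

definition cpoly :: "nat \<Rightarrow> lpoly \<Rightarrow> (nat \<Rightarrow> complex) \<Rightarrow> complex poly" where
  "cpoly d p z = (\<Sum>e\<in>lsupp p. monom (p e * (\<Prod>i<d. z i powi e i)) (nat (e d - bot_deg (Suc d) p)))"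

lemma lpeval_cpoly:
  assumes p: "laurent_poly (Suc d) p" and x: "x \<noteq> 0"
  shows "lpeval (Suc d) p (z(d:=x)) = x powi bot_deg (Suc d) p * poly (cpoly d p z) x"
proof -
  let ?b = "bot_deg (Suc d) p"
  have "lpeval (Suc d) p (z(d:=x)) = (\<Sum>e\<in>lsupp p. p e * ((\<Prod>i<d. z i powi e i) * x powi e d))"
    unfolding lpeval_def by (intro sum.cong refl) (simp add: prod.lessThan_Suc)
  also have "\<dots> = (\<Sum>e\<in>lsupp p. x powi ?b * (p e * (\<Prod>i<d. z i powi e i) * x ^ nat (e d - ?b)))"
  proof (intro sum.cong refl)
    fix e assume e: "e \<in> lsupp p"
    have "?b \<le> e d" using top_bot_bounds[OF p e] by simp
    hence "e d = ?b + int (nat (e d - ?b))" by simp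
    hence h: "x powi e d = x powi ?b * x ^ nat (e d - ?b)"
      using x by (metis power_int_add power_int_of_nat)
    show "p e * ((\<Prod>i<d. z i powi e i) * x powi e d) = x powi ?b * (p e * (\<Prod>i<d. z i powi e i) * x ^ nat (e d - ?b))"
      by (simp only: h mult_ac)
  qed
  also have "\<dots> = x powi ?b * poly (cpoly d p z) x"
    unfolding cpoly_def poly_sum poly_monom sum_distrib_left ..
  finally show ?thesis .
qed

lemma coeff_cpoly:
  "coeff (cpoly d p z) k = (\<Sum>e\<in>lsupp p. if nat (e d - bot_deg (Suc d) p) = k then p e * (\<Prod>i<d. z i powi e i) else 0)"
  unfolding cpoly_def coeff_sum coeff_monom ..

lemma coeff_cpoly_big:
  assumes p: "laurent_poly (Suc d) p" and k: "width (Suc d) p < k"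
  shows "coeff (cpoly d p z) k = 0"
  unfolding coeff_cpoly
proof (intro sum.neutral ballI)
  fix e assume e: "e \<in> lsupp p"
  have "nat (e d - bot_deg (Suc d) p) \<le> width (Suc d) p"
    using top_bot_bounds[OF p e] unfolding width_eq by simp
  thus "(if nat (e d - bot_deg (Suc d) p) = k then p e * (\<Prod>i<d. z i powi e i) else 0) = 0"
    using k by auto
qed

lemma coeff_cpoly_top:
  assumes p: "laurent_poly (Suc d) p"
  shows "coeff (cpoly d p z) (width (Suc d) p) = lpeval d (qplus (Suc d) p) z"
proof -
  have fin: "finite (lsupp p)" using p unfolding laurent_poly_def by simp
  have eq: "(nat (e d - bot_deg (Suc d) p) = width (Suc d) p) \<longleftrightarrow> e d = top_deg (Suc d) p"
    if e: "e \<in> lsupp p" for e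
    using top_bot_bounds[OF p e] unfolding width_eq by auto
  have "coeff (cpoly d p z) (width (Suc d) p)
        = (\<Sum>e\<in>lsupp p. if e d = top_deg (Suc d) p then p e * (\<Prod>i<d. z i powi e i) else 0)"
    unfolding coeff_cpoly by (intro sum.cong refl) (simp add: eq)
  also have "\<dots> = (\<Sum>e\<in>{e\<in>lsupp p. e d = top_deg (Suc d) p}. p e * (\<Prod>i<d. z i powi e i))"
    using fin by (simp add: sum.inter_filter)
  also have "\<dots> = lpeval d (qplus (Suc d) p) z" by (rule lpeval_qplus[symmetric])
  finally show ?thesis .
qed

lemma fiber_rep:
  assumes p: "laurent_poly (Suc d) p" and c: "lpeval d (qplus (Suc d) p) z \<noteq> 0"
  obtains a where "\<And>x. cmod x = 1 \<Longrightarrow> cmod (lpeval (Suc d) p (z(d:=x)))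
      = cmod (lpeval d (qplus (Suc d) p) z) * (\<Prod>j<width (Suc d) p. cmod (x - a j))"
proof -
  let ?P = "cpoly d p z" and ?w = "width (Suc d) p" and ?c = "lpeval d (qplus (Suc d) p) z"
  have deg: "degree ?P = ?w"
  proof (rule antisym)
    show "degree ?P \<le> ?w" using coeff_cpoly_big[OF p] by (intro degree_le) auto
    show "?w \<le> degree ?P" using coeff_cpoly_top[OF p] c by (intro le_degree) simp
  qed
  have lc: "lead_coeff ?P = ?c" using deg coeff_cpoly_top[OF p] by simp
  obtain root where r: "smult (lead_coeff ?P) (\<Prod>i<degree ?P. [:-root i, 1:]) = ?P"
    by (rule complex_poly_decompose')
  have pe: "poly ?P x = ?c * (\<Prod>j<?w. (x - root j))" for x
  proof -
    have "poly ?P x = poly (smult (lead_coeff ?P) (\<Prod>i<degree ?P. [:-root i, 1:])) x"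
      by (simp only: r)
    also have "\<dots> = ?c * (\<Prod>j<?w. (x - root j))"
      by (simp add: poly_prod lc deg coeff_cpoly_top[OF p])
    finally show ?thesis .
  qed
  show ?thesis
  proof (rule that)
    fix x :: complex assume x: "cmod x = 1"
    hence x0: "x \<noteq> 0" by auto
    have "cmod (lpeval (Suc d) p (z(d:=x))) = cmod (x powi bot_deg (Suc d) p) * cmod (poly ?P x)"
      by (simp add: lpeval_cpoly[OF p x0] norm_mult)
    also have "cmod (x powi bot_deg (Suc d) p) = 1" by (simp add: norm_power_int x)
    also have "cmod (poly ?P x) = cmod ?c * (\<Prod>j<?w. cmod (x - root j))"
      by (simp add: pe norm_mult prod_norm)
    finally show "cmod (lpeval (Suc d) p (z(d:=x))) = cmod ?c * (\<Prod>j<?w. cmod (x - root j))"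
      by (simp only: mult_1_left)
  qed
qed



lemma torus_prob: "prob_space (haar_torus d)"
  unfolding haar_torus_def by (intro prob_space_PiM haar_circle_prob)

lemma psf: "product_sigma_finite (\<lambda>_::nat. haar_circle)"
  unfolding product_sigma_finite_def
  using prob_space_imp_sigma_finite[OF haar_circle_prob] by simp

lemma fiber_meas:
  assumes z: "z \<in> space (haar_torus d)"
  shows "(\<lambda>x. lpeval (Suc d) p (z(d:=x))) \<in> borel_measurable borel"
proof -
  have u: "(\<lambda>x. z(d:=x)) \<in> measurable haar_circle (PiM (insert d {..<d}) (\<lambda>_. haar_circle))"
    using z unfolding haar_torus_def by (intro measurable_component_update) auto
  have l: "(\<lambda>z. lpeval (Suc d) p z) \<in> borel_measurable (PiM (insert d {..<d}) (\<lambda>_. haar_circle))"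
    by (rule meas_lpeval) auto
  have "(\<lambda>x. lpeval (Suc d) p (z(d:=x))) \<in> borel_measurable haar_circle"
    by (rule measurable_compose[OF u l])
  thus ?thesis by (simp only: measurable_cong_sets[OF sets_haar_circle refl])
qed

lemma level_set_sets:
  assumes "f \<in> borel_measurable M"
  shows "{z\<in>space M. cmod (f z) \<le> (c::real)} \<in> sets M"
proof -
  have "(\<lambda>z. cmod (f z)) \<in> borel_measurable M" using measurable_compose[OF assms borel_measurable_norm] by simp
  hence "(\<lambda>z. cmod (f z)) -` {..c} \<inter> space M \<in> sets M" by (rule measurable_sets) simp
  moreover have "(\<lambda>z. cmod (f z)) -` {..c} \<inter> space M = {z\<in>space M. cmod (f z) \<le> c}" by auto
  ultimately show ?thesis by simp
qed

lemma fubini_eq: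
  "emeasure (haar_torus (Suc d)) {z\<in>space (haar_torus (Suc d)). cmod (lpeval (Suc d) p z) \<le> lam}
   = (\<integral>\<^sup>+ z. emeasure haar_circle {x. cmod (lpeval (Suc d) p (z(d:=x))) \<le> lam} \<partial>haar_torus d)"
proof -
  interpret product_sigma_finite "\<lambda>_::nat. haar_circle" by (rule psf)
  let ?M = "PiM (insert d {..<d}) (\<lambda>_::nat. haar_circle)"
  have T: "haar_torus (Suc d) = ?M" unfolding haar_torus_def lessThan_Suc ..
  let ?S = "{z\<in>space ?M. cmod (lpeval (Suc d) p z) \<le> lam}"
  have Sm: "?S \<in> sets ?M"
    by (rule level_set_sets, rule meas_lpeval) auto
  have "emeasure ?M ?S = (\<integral>\<^sup>+ z. indicator ?S z \<partial>?M)"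
    using Sm by simp
  also have "\<dots> = (\<integral>\<^sup>+ x. (\<integral>\<^sup>+ y. indicator ?S (x(d := y)) \<partial>haar_circle) \<partial>PiM {..<d} (\<lambda>_. haar_circle))"
    by (rule product_nn_integral_insert) (use Sm in auto)
  also have "\<dots> = (\<integral>\<^sup>+ z. emeasure haar_circle {x. cmod (lpeval (Suc d) p (z(d:=x))) \<le> lam} \<partial>haar_torus d)"
    unfolding haar_torus_def
  proof (rule nn_integral_cong)
    fix x assume x: "x \<in> space (PiM {..<d} (\<lambda>_. haar_circle))"
    have sp: "x(d := y) \<in> space ?M" for y
      using measurable_space[OF measurable_component_update[OF x, of d] ] by simp
    have "(\<integral>\<^sup>+ y. indicator ?S (x(d := y)) \<partial>haar_circle)
          = (\<integral>\<^sup>+ y. indicator {y. cmod (lpeval (Suc d) p (x(d:=y))) \<le> lam} y \<partial>haar_circle)"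
      by (intro nn_integral_cong) (simp add: sp indicator_def)
    also have "\<dots> = emeasure haar_circle {y. cmod (lpeval (Suc d) p (x(d:=y))) \<le> lam}"
    proof -
      have "{y\<in>space haar_circle. cmod (lpeval (Suc d) p (x(d:=y))) \<le> lam} \<in> sets haar_circle"
        using fiber_meas[of x d p] x unfolding haar_torus_def
        by (intro level_set_sets) (simp add: measurable_cong_sets[OF sets_haar_circle refl])
      thus ?thesis by simp
    qed
    finally show "(\<integral>\<^sup>+ y. indicator ?S (x(d := y)) \<partial>haar_circle)
          = emeasure haar_circle {y. cmod (lpeval (Suc d) p (x(d:=y))) \<le> lam}" .
  qed
  finally show ?thesis unfolding T .
qed



lemma fiber_bound:
  assumes p: "laurent_poly (Suc d) p" and W: "1 \<le> W" "width (Suc d) p \<le> W"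
    and lam: "0 < lam" and z: "z \<in> space (haar_torus d)"
    and c: "lpeval d (qplus (Suc d) p) z \<noteq> 0"
  shows "emeasure haar_circle {x. cmod (lpeval (Suc d) p (z(d:=x))) \<le> lam}
         \<le> ennreal (2 * real W * (lam / cmod (lpeval d (qplus (Suc d) p) z)) powr (1 / real W))"
proof -
  obtain a where a: "\<And>x. cmod x = 1 \<Longrightarrow> cmod (lpeval (Suc d) p (z(d:=x)))
      = cmod (lpeval d (qplus (Suc d) p) z) * (\<Prod>j<width (Suc d) p. cmod (x - a j))"
    using fiber_rep[OF p c] by blast
  show ?thesis
    by (rule one_var[OF fiber_meas[OF z] c a W lam])
qed

lemma step_bound:
  assumes p: "laurent_poly (Suc d) p" and W: "1 \<le> W" "width (Suc d) p \<le> W"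
    and lam: "0 < lam" and s: "0 < s"
  shows "emeasure (haar_torus (Suc d)) {z\<in>space (haar_torus (Suc d)). cmod (lpeval (Suc d) p z) \<le> lam}
    \<le> emeasure (haar_torus d) {z\<in>space (haar_torus d). cmod (lpeval d (qplus (Suc d) p) z) \<le> s}
       + ennreal (2 * real W * (lam/s) powr (1 / real W))"
proof -
  interpret P: prob_space haar_circle by (rule haar_circle_prob)
  interpret T: prob_space "haar_torus d" by (rule torus_prob)
  let ?S = "{z\<in>space (haar_torus d). cmod (lpeval d (qplus (Suc d) p) z) \<le> s}"
  let ?K = "ennreal (2 * real W * (lam/s) powr (1 / real W))"
  have Sm: "?S \<in> sets (haar_torus d)"
    by (rule level_set_sets) (unfold haar_torus_def, rule meas_lpeval, simp)
  have "emeasure (haar_torus (Suc d)) {z\<in>space (haar_torus (Suc d)). cmod (lpeval (Suc d) p z) \<le> lam}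
        = (\<integral>\<^sup>+ z. emeasure haar_circle {x. cmod (lpeval (Suc d) p (z(d:=x))) \<le> lam} \<partial>haar_torus d)"
    by (rule fubini_eq)
  also have "\<dots> \<le> (\<integral>\<^sup>+ z. indicator ?S z + ?K \<partial>haar_torus d)"
  proof (rule nn_integral_mono)
    fix z assume z: "z \<in> space (haar_torus d)"
    let ?c = "lpeval d (qplus (Suc d) p) z"
    show "emeasure haar_circle {x. cmod (lpeval (Suc d) p (z(d:=x))) \<le> lam} \<le> indicator ?S z + ?K"
    proof (cases "cmod ?c \<le> s")
      case True
      hence "indicator ?S z = (1::ennreal)" using z by (simp add: indicator_def)
      moreover have "emeasure haar_circle {x. cmod (lpeval (Suc d) p (z(d:=x))) \<le> lam} \<le> 1"
        by (rule P.emeasure_le_1)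
      ultimately show ?thesis by (metis add_increasing2 zero_le)
    next
      case False
      hence c0: "?c \<noteq> 0" using s by auto
      have "emeasure haar_circle {x. cmod (lpeval (Suc d) p (z(d:=x))) \<le> lam}
            \<le> ennreal (2 * real W * (lam / cmod ?c) powr (1 / real W))"
        by (rule fiber_bound[OF p W lam z c0])
      also have "\<dots> \<le> ?K"
      proof (rule ennreal_leI)
        have cpos: "s < cmod ?c" using False by simp
        have "0 < cmod ?c * s" using cpos s by (intro mult_pos_pos) auto
        hence "lam / cmod ?c \<le> lam / s" using cpos s lam by (intro divide_left_mono) auto
        hence "(lam / cmod ?c) powr (1 / real W) \<le> (lam/s) powr (1 / real W)"
          using lam c0 by (intro powr_mono2) auto
        thus "2 * real W * (lam / cmod ?c) powr (1 / real W) \<le> 2 * real W * (lam/s) powr (1 / real W)"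
          by (intro mult_left_mono) auto
      qed
      also have "\<dots> \<le> indicator ?S z + ?K" by simp
      finally show ?thesis .
    qed
  qed
  also have "\<dots> = (\<integral>\<^sup>+ z. indicator ?S z \<partial>haar_torus d) + (\<integral>\<^sup>+ z. ?K \<partial>haar_torus d)"
    by (rule nn_integral_add) (use Sm in auto)
  also have "\<dots> = emeasure (haar_torus d) ?S + ?K"
    using Sm by (simp add: T.emeasure_space_1)
  finally show ?thesis .
qed



lemma lsupp_0:
  assumes "laurent_poly 0 q"
  shows "lsupp q \<subseteq> {(\<lambda>_. 0)}"
  using assms unfolding laurent_poly_def by (auto simp: fun_eq_iff)

lemma lpeval_0:
  assumes "laurent_poly 0 q"
  shows "lpeval 0 q z = q (\<lambda>_. 0)"
proof (cases "q (\<lambda>_. 0) = 0")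
  case True
  hence "lsupp q = {}" using lsupp_0[OF assms] unfolding lsupp_def by auto
  thus ?thesis using True unfolding lpeval_def by simp
next
  case False
  hence "lsupp q = {(\<lambda>_. 0)}" using lsupp_0[OF assms] unfolding lsupp_def by auto
  thus ?thesis unfolding lpeval_def by simp
qed

lemma lead_nonzero:
  "laurent_poly d p \<Longrightarrow> lsupp p \<noteq> {} \<Longrightarrow> lead d p \<noteq> 0"
proof (induction d arbitrary: p)
  case 0
  hence "lsupp p = {(\<lambda>_. 0)}" using lsupp_0 by blast
  thus ?case unfolding lead_def lsupp_def by auto
next
  case (Suc d)
  show ?case unfolding lead_shift
    using Suc.IH[OF qplus_laurent[OF Suc.prems]] .
qed

lemma main_claim:
  "1 \<le> d \<Longrightarrow> laurent_poly d p \<Longrightarrow> lsupp p \<noteq> {} \<Longrightarrow> 1 \<le> W \<Longrightarrow>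
   (\<forall>i<d. width (d-i) (lead_seq d i p) \<le> W) \<Longrightarrow> 0 < lam \<Longrightarrow>
   emeasure (haar_torus d) {z\<in>space (haar_torus d). cmod (lpeval d p z) \<le> lam}
     \<le> ennreal (2 * real d * real W * (lam / cmod (lead d p)) powr (1 / (real d * real W)))"
proof (induction d arbitrary: p lam)
  case 0 thus ?case by simp
next
  case (Suc d)
  note p = Suc.prems(2) and ne = Suc.prems(3) and W1 = Suc.prems(4) and wid = Suc.prems(5)
    and lam = Suc.prems(6)
  define p1 where "p1 = qplus (Suc d) p"
  have p1: "laurent_poly d p1" "lsupp p1 \<noteq> {}" unfolding p1_def using qplus_laurent[OF p ne] by auto
  have w0: "width (Suc d) p \<le> W" using wid[rule_format, of 0] by simp
  have wid1: "\<forall>i<d. width (d-i) (lead_seq d i p1) \<le> W"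
  proof (intro allI impI)
    fix i assume "i < d"
    hence "Suc i < Suc d" by simp
    hence "width (Suc d - Suc i) (lead_seq (Suc d) (Suc i) p) \<le> W" using wid by blast
    thus "width (d-i) (lead_seq d i p1) \<le> W" unfolding p1_def width_shift .
  qed
  have Leq: "lead (Suc d) p = lead d p1" unfolding p1_def by (rule lead_shift)
  define L where "L = cmod (lead d p1)"
  have Lpos: "0 < L" unfolding L_def using lead_nonzero[OF p1] by simp
  interpret T: prob_space "haar_torus d" by (rule torus_prob)
  show ?case
  proof (cases "d = 0")
    case True
    have "emeasure (haar_torus (Suc d)) {z\<in>space (haar_torus (Suc d)). cmod (lpeval (Suc d) p z) \<le> lam}
        = (\<integral>\<^sup>+ z. emeasure haar_circle {x. cmod (lpeval (Suc d) p (z(d:=x))) \<le> lam} \<partial>haar_torus d)"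
      by (rule fubini_eq)
    also have "\<dots> \<le> (\<integral>\<^sup>+ z. ennreal (2 * real W * (lam / L) powr (1 / real W)) \<partial>haar_torus d)"
    proof (rule nn_integral_mono)
      fix z assume z: "z \<in> space (haar_torus d)"
      have ev: "lpeval d (qplus (Suc d) p) z = lead d p1"
        using lpeval_0[OF p1(1)[unfolded True]] True unfolding p1_def lead_def by simp
      have c0: "lpeval d (qplus (Suc d) p) z \<noteq> 0" using ev lead_nonzero[OF p1] by simp
      show "emeasure haar_circle {x. cmod (lpeval (Suc d) p (z(d:=x))) \<le> lam}
            \<le> ennreal (2 * real W * (lam / L) powr (1 / real W))"
        using fiber_bound[OF p W1 w0 lam z c0] unfolding ev L_def .
    qed
    also have "\<dots> = ennreal (2 * real W * (lam / L) powr (1 / real W))"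
      by (simp add: T.emeasure_space_1)
    finally show ?thesis unfolding Leq L_def[symmetric] using True by simp
  next
    case False
    hence d1: "1 \<le> d" by simp
    define x where "x = lam / L"
    have xpos: "0 < x" unfolding x_def using lam Lpos by simp
    define s where "s = L * x powr (real d / (real d + 1))"
    have spos: "0 < s" unfolding s_def using Lpos xpos by simp
    define X where "X = x powr (1 / ((real d + 1) * real W))"
    have W0: "0 < real W" using W1 by simp
    have e1: "(s / L) powr (1 / (real d * real W)) = X"
    proof -
      have "s / L = x powr (real d / (real d + 1))" unfolding s_def using Lpos by simp
      hence "(s / L) powr (1 / (real d * real W)) = x powr (real d / (real d + 1) * (1 / (real d * real W)))"
        by (simp add: powr_powr)
      also have "real d / (real d + 1) * (1 / (real d * real W)) = 1 / ((real d + 1) * real W)"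
        using d1 W0 by (simp add: field_simps)
      finally show ?thesis unfolding X_def .
    qed
    have e2: "(lam / s) powr (1 / real W) = X"
    proof -
      have "lam / s = x / x powr (real d / (real d + 1))"
        unfolding s_def x_def using Lpos by (simp add: field_simps)
      also have "\<dots> = x powr (1 - real d / (real d + 1))"
        using xpos by (simp add: powr_diff)
      also have "1 - real d / (real d + 1) = 1 / (real d + 1)" by (simp add: field_simps)
      finally have "(lam / s) powr (1 / real W) = x powr (1 / (real d + 1) * (1 / real W))"
        by (simp add: powr_powr)
      also have "1 / (real d + 1) * (1 / real W) = 1 / ((real d + 1) * real W)" by simp
      finally show ?thesis unfolding X_def .
    qed
    have "emeasure (haar_torus (Suc d)) {z\<in>space (haar_torus (Suc d)). cmod (lpeval (Suc d) p z) \<le> lam}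
      \<le> emeasure (haar_torus d) {z\<in>space (haar_torus d). cmod (lpeval d p1 z) \<le> s}
         + ennreal (2 * real W * (lam/s) powr (1 / real W))"
      unfolding p1_def by (rule step_bound[OF p W1 w0 lam spos])
    also have "\<dots> \<le> ennreal (2 * real d * real W * (s / L) powr (1 / (real d * real W)))
         + ennreal (2 * real W * (lam/s) powr (1 / real W))"
      using Suc.IH[OF d1 p1 W1 wid1 spos] unfolding L_def by (intro add_right_mono)
    also have "\<dots> = ennreal (2 * real (Suc d) * real W * X)"
      unfolding e1 e2 using X_def by (simp add: ennreal_plus[symmetric] algebra_simps del: ennreal_plus)
    finally show ?thesis unfolding Leq L_def[symmetric] X_def x_def by (simp add: algebra_simps)
  qed
qed



lemma monomial_case:
  "laurent_poly d p \<Longrightarrow> lsupp p \<noteq> {} \<Longrightarrow> (\<forall>i<d. width (d-i) (lead_seq d i p) = 0) \<Longrightarrow>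
   \<exists>e0. lsupp p = {e0} \<and> p e0 = lead d p"
proof (induction d arbitrary: p)
  case 0
  hence "lsupp p = {(\<lambda>_. 0)}" using lsupp_0 by blast
  thus ?case unfolding lead_def lsupp_def by auto
next
  case (Suc d)
  note p = Suc.prems(1) and ne = Suc.prems(2) and wid = Suc.prems(3)
  define p1 where "p1 = qplus (Suc d) p"
  have p1: "laurent_poly d p1" "lsupp p1 \<noteq> {}" unfolding p1_def using qplus_laurent[OF p ne] by auto
  have w0: "width (Suc d) p = 0" using wid[rule_format, of 0] by simp
  have wid1: "\<forall>i<d. width (d-i) (lead_seq d i p1) = 0"
  proof (intro allI impI)
    fix i assume "i < d"
    hence "Suc i < Suc d" by simp
    hence "width (Suc d - Suc i) (lead_seq (Suc d) (Suc i) p) = 0" using wid by blast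
    thus "width (d-i) (lead_seq d i p1) = 0" unfolding p1_def width_shift .
  qed
  obtain f0 where f0: "lsupp p1 = {f0}" "p1 f0 = lead d p1" using Suc.IH[OF p1 wid1] by blast
  let ?t = "top_deg (Suc d) p"
  have allt: "e d = ?t" if "e \<in> lsupp p" for e
    using top_bot_bounds[OF p that] w0 unfolding width_eq by simp
  have f0d: "f0 d = 0" using f0 unfolding p1_def lsupp_def qplus_eq by (auto split: if_splits)
  have sub: "e = f0(d := ?t)" if e: "e \<in> lsupp p" for e
  proof -
    have "e(d:=0) \<in> lsupp p1" unfolding p1_def lsupp_qplus using e allt[OF e] by auto
    hence "e(d:=0) = f0" using f0 by auto
    thus ?thesis using allt[OF e] by (auto simp: fun_eq_iff split: if_splits)
  qed
  obtain e where e: "e \<in> lsupp p" using ne by auto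
  have "lsupp p = {f0(d := ?t)}" using sub e by blast
  moreover have "p (f0(d := ?t)) = lead (Suc d) p"
    using f0 f0d unfolding lead_shift p1_def[symmetric] unfolding p1_def qplus_eq by simp
  ultimately show ?case by blast
qed

lemma AE_circle: "AE x in haar_circle. cmod x = 1"
proof -
  have "{x \<in> space borel. cmod x = 1} \<in> sets (borel :: complex measure)" by measurable
  hence "(AE x in haar_circle. cmod x = 1) \<longleftrightarrow> (AE t in uniform_measure lborel {0..2*pi}. cmod (cis t) = 1)"
    unfolding haar_circle_def by (intro AE_distr_iff) auto
  thus ?thesis by simp
qed

lemma AE_torus: "AE z in haar_torus d. \<forall>i\<in>{..<d}. cmod (z i) = 1"
proof (rule AE_finite_allI)
  fix i assume "i \<in> {..<d}"
  thus "AE z in haar_torus d. cmod (z i) = 1"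
    unfolding haar_torus_def using AE_circle
    by (intro AE_PiM_component[where P="\<lambda>x. cmod x = 1"] haar_circle_prob)
qed simp

lemma const_two: "2 \<le> 8 * sqrt 3 / sqrt 47"
proof -
  have "sqrt (4 * 47) \<le> sqrt (64 * 3)" by simp
  moreover have "sqrt (4 * 47) = sqrt 4 * sqrt (47::real)" by (rule real_sqrt_mult)
  moreover have "sqrt (64 * 3) = sqrt 64 * sqrt (3::real)" by (rule real_sqrt_mult)
  moreover have "sqrt (4::real) = 2" by (rule real_sqrt_unique) auto
  moreover have "sqrt (64::real) = 8" by (rule real_sqrt_unique) auto
  ultimately have "2 * sqrt 47 \<le> 8 * sqrt 3" by metis
  thus ?thesis by (simp add: field_simps)
qed



theorem proposition2p1:
  fixes d :: nat and p :: lpoly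
  assumes "d \<ge> 1" and "laurent_poly d p" and "lsupp p \<noteq> {}"
  shows "(wd d p = 0 \<longrightarrow>
            (\<forall>t. 0 \<le> t \<and> t < cmod (lead d p) \<longrightarrow> spec_density d p t = 0) \<and>
            (\<forall>t. t \<ge> cmod (lead d p) \<longrightarrow> spec_density d p t = 1)) \<and>
         (wd d p \<ge> 1 \<longrightarrow>
            (\<forall>t\<ge>0. spec_density d p t
               \<le> 8 * sqrt 3 / sqrt 47 * real d * real (wd d p)
                 * (t / cmod (lead d p)) powr (1 / (real d * real (wd d p)))))"
proof -
  note d1 = assms(1) and p = assms(2) and ne = assms(3)
  interpret T: prob_space "haar_torus d" by (rule torus_prob)
  define L where "L = cmod (lead d p)"
  have Lpos: "0 < L" unfolding L_def using lead_nonzero[OF p ne] by simp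
  have wdge: "\<forall>i<d. width (d-i) (lead_seq d i p) \<le> wd d p"
    unfolding wd_def by (auto intro: Max_ge)
  define S where "S = (\<lambda>t. {z\<in>space (haar_torus d). cmod (lpeval d p z) \<le> t})"
  have Sm: "S t \<in> sets (haar_torus d)" for t
    unfolding S_def by (rule level_set_sets) (unfold haar_torus_def, rule meas_lpeval, simp)
  have sd: "spec_density d p t = measure (haar_torus d) (S t)" for t
    unfolding spec_density_def S_def ..
  have part1: "wd d p = 0 \<longrightarrow>
            (\<forall>t. 0 \<le> t \<and> t < L \<longrightarrow> spec_density d p t = 0) \<and>
            (\<forall>t. t \<ge> L \<longrightarrow> spec_density d p t = 1)"
  proof
    assume w0: "wd d p = 0"
    have wid0: "\<forall>i<d. width (d-i) (lead_seq d i p) = 0" using wdge w0 by auto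
    obtain e0 where e0: "lsupp p = {e0}" "p e0 = lead d p" using monomial_case[OF p ne wid0] by blast
    have AEeq: "AE z in haar_torus d. cmod (lpeval d p z) = L"
      using AE_torus
    proof eventually_elim
      case (elim z)
      have "lpeval d p z = p e0 * (\<Prod>i<d. z i powi e0 i)" unfolding lpeval_def e0(1) by simp
      hence "cmod (lpeval d p z) = cmod (p e0) * (\<Prod>i<d. cmod (z i) powi e0 i)"
        by (simp add: norm_mult prod_norm[symmetric] norm_power_int)
      also have "(\<Prod>i<d. cmod (z i) powi e0 i) = 1" using elim by (intro prod.neutral) simp
      finally show ?case unfolding L_def e0(2) by simp
    qed
    have eq: "spec_density d p t = measure (haar_torus d) {z\<in>space (haar_torus d). L \<le> t}" for t
      unfolding sd
    proof (rule measure_eq_AE)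
      show "AE z in haar_torus d. (z \<in> S t) = (z \<in> {z\<in>space (haar_torus d). L \<le> t})"
        using AEeq by eventually_elim (auto simp: S_def)
      show "S t \<in> sets (haar_torus d)" by (rule Sm)
      show "{z\<in>space (haar_torus d). L \<le> t} \<in> sets (haar_torus d)"
        by (cases "L \<le> t") auto
    qed
    show "(\<forall>t. 0 \<le> t \<and> t < L \<longrightarrow> spec_density d p t = 0) \<and> (\<forall>t. t \<ge> L \<longrightarrow> spec_density d p t = 1)"
      unfolding eq using T.prob_space by auto
  qed
  have part2: "wd d p \<ge> 1 \<longrightarrow>
            (\<forall>t\<ge>0. spec_density d p t
               \<le> 8 * sqrt 3 / sqrt 47 * real d * real (wd d p) * (t / L) powr (1 / (real d * real (wd d p))))"
  proof (intro impI)
    assume W1: "1 \<le> wd d p"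
    define W where "W = wd d p"
    have Wpos: "0 < real d * real W" using W1 d1 unfolding W_def by simp
    have bnd: "spec_density d p t \<le> 2 * real d * real W * (t / L) powr (1 / (real d * real W))"
      if t: "0 < t" for t
    proof -
      have "ennreal (measure (haar_torus d) (S t)) = emeasure (haar_torus d) (S t)"
        by (simp add: T.emeasure_eq_measure)
      also have "\<dots> \<le> ennreal (2 * real d * real W * (t / L) powr (1 / (real d * real W)))"
        unfolding S_def W_def L_def using main_claim[OF d1 p ne W1 wdge t] .
      finally show ?thesis unfolding sd by (subst (asm) ennreal_le_iff) auto
    qed
    show "\<forall>t\<ge>0. spec_density d p t
       \<le> 8 * sqrt 3 / sqrt 47 * real d * real (wd d p) * (t / L) powr (1 / (real d * real (wd d p)))"
    proof (intro allI impI)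
      fix t :: real
      assume t0: "0 \<le> t"
      show "spec_density d p t
       \<le> 8 * sqrt 3 / sqrt 47 * real d * real (wd d p) * (t / L) powr (1 / (real d * real (wd d p)))"
      proof (cases "t = 0")
        case False
        hence t: "0 < t" using t0 by simp
        have "spec_density d p t \<le> 2 * (real d * real W * (t / L) powr (1 / (real d * real W)))"
          using bnd[OF t] by (simp add: mult.assoc)
        also have "\<dots> \<le> 8 * sqrt 3 / sqrt 47 * (real d * real W * (t / L) powr (1 / (real d * real W)))"
          using const_two by (intro mult_right_mono) auto
        finally show ?thesis unfolding W_def by (simp add: mult.assoc)
      next
        case True
        define m where "m = spec_density d p 0"
        have "m \<le> 0"
        proof (rule ccontr)
          assume "\<not> m \<le> 0"
          hence m0: "0 < m" by simp
          define t' where "t' = L * (m / (4 * (real d * real W))) powr (real d * real W)"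
          have q: "0 < m / (4 * (real d * real W))" using m0 Wpos by simp
          have q2: "0 < (m / (4 * (real d * real W))) powr (real d * real W)"
            using q by (subst powr_gt_zero) (metis less_irrefl)
          have t'pos: "0 < t'" unfolding t'_def by (rule mult_pos_pos[OF Lpos q2])
          have "(t' / L) powr (1 / (real d * real W)) = m / (4 * (real d * real W))"
            unfolding t'_def using Lpos m0 Wpos by (simp add: powr_powr)
          hence "spec_density d p t' \<le> 2 * real d * real W * (m / (4 * (real d * real W)))"
            using bnd[OF t'pos] by simp
          also have "\<dots> = m / 2" using d1 W1 unfolding W_def by (simp add: field_simps)
          finally have 1: "spec_density d p t' \<le> m / 2" .
          have "m \<le> spec_density d p t'"
            unfolding m_def sd using t'pos
            by (intro T.finite_measure_mono Sm) (auto simp: S_def)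
          thus False using 1 m0 by simp
        qed
        thus ?thesis using True unfolding m_def by simp
      qed
    qed
  qed
  show ?thesis using part1 part2 unfolding L_def by blast
qed


end
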